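(* Let $r\in(0,1)$ and $S_2^{in}>0$ be fixed, and work in the plane $(D,S_1^{in})$. Suppose $m_1>\mu_2(S_2^{in})$ and let $D_1^*=r\mu_2(S_2^{in})$, $D_2^*=(1-r)\mu_2(S_2^{in})$. Then the curve $\gamma_0=\{S_1^{in}=\lambda_1^1(D,r)\}$ and the vertical line $\gamma_6=\{D=D_1^*\}$ intersect at $P_1=(D_1^*,\lambda_1^1(D_1^*,r))$. If in addition $S_2^{in}\ge S_2^m$, then $\gamma_0$, $\gamma_5=\{S_1^{in}=F_{12}(D,r,S_2^{in})\}$ and $\gamma_6$ intersect at the same point $P_1$; if $S_2^{in}<S_2^m$, then $\gamma_0$, $\gamma_4=\{S_1^{in}=F_{11}(D,r,S_2^{in})\}$ and $\gamma_6$ intersect at $P_1$. Moreover (for $D$ where the functions are defined): \begin{itemize} \item if $D<D_1^*$, then $F_{11}(D,r,S_2^{in})<\lambda_1^1(D,r)<F_{12}(D,r,S_2^{in})$; \item if $D>D_1^*$ and $S_2^{in}\ge S_2^m$, then $F_{11}<F_{12}<\lambda_1^1$; \item if $D>D_1^*$ and $S_2^{in}<S_2^m$, then $\lambda_1^1<F_{11}<F_{12}$. \end{itemize} Likewise, the curve $\gamma_1=\{S_1^{in}=\lambda_1^2(D,r)\}$ and the vertical line $\gamma_7=\{D=D_2^*\}$ intersect at $P_2=(D_2^*,\lambda_1^2(D_2^*,r))$; if $S_2^{in}\ge S_2^m$, then $\gamma_1$, $\gamma_3=\{S_1^{in}=F_{22}(D,r,S_2^{in})\}$ and $\gamma_7$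 intersect at $P_2$; if $S_2^{in}<S_2^m$, then $\gamma_1$, $\gamma_2=\{S_1^{in}=F_{21}(D,r,S_2^{in})\}$ and $\gamma_7$ intersect at $P_2$. Moreover: \begin{itemize} \item if $D<D_2^*$, then $F_{21}<\lambda_1^2<F_{22}$; \item if $D>D_2^*$ and $S_2^{in}\ge S_2^m$, then $F_{21}<F_{22}<\lambda_1^2$; \item if $D>D_2^*$ and $S_2^{in}<S_2^m$, then $\lambda_1^2<F_{21}<F_{22}$. \end{itemize}
   Context: Let $k_1,k_2>0$, $r_1=r$, $r_2=1-r$, $D_i=D/r_i$. $\mu_1\in C^1(\mathbb R_+)$ with $\mu_1(0)=0$, $\mu_1(+\infty)=m_1$, $\mu_1'>0$ on $(0,\infty)$; $\mu_2\in C^1(\mathbb R_+)$ with $\mu_2(0)=0$, $\mu_2(+\infty)=0$, and there is $S_2^m>0$ with $\mu_2'>0$ on $(0,S_2^m)$, $\mu_2'<0$ on $(S_2^m,\infty)$. For $i=1,2$: $\lambda_1^i(D,r)$ is the unique solution of $\mu_1(S)=D_i$ for $0<D<r_im_1$ ($+\infty$ otherwise); $\lambda_2^{i1}(D,r)\le\lambda_2^{i2}(D,r)$ are the solutions of $\mu_2(S)=D_i$ for $0<D\le r_i\mu_2(S_2^m)$ ($+\infty$ otherwise); $F_{ij}(D,r,S_2^{in})=\lambda_1^i(D,r)+\frac{k_1}{k_2}(\lambda_2^{ij}(D,r)-S_2^{in})$, defined for $0<D<\min(r_im_1,r_i\mu_2(S_2^m))$. *)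

theory Defs
  imports "HOL-Analysis.Analysis"
begin

definition rr :: "nat \<Rightarrow> real \<Rightarrow> real" where
  "rr i r = (if i = 1 then r else 1 - r)"

text \<open>lambda_1^i(D,r): the unique solution S of mu_1(S) = D / r_i (meaningful for 0 < D < r_i m_1).\<close>
definition lam1 :: "(real \<Rightarrow> real) \<Rightarrow> nat \<Rightarrow> real \<Rightarrow> real \<Rightarrow> real" where
  "lam1 mu1 i D r = (THE S. 0 \<le> S \<and> mu1 S = D / rr i r)"

text \<open>lambda_2^{i1}(D,r) <= lambda_2^{i2}(D,r): the smallest and the largest solution S of
  mu_2(S) = D / r_i (meaningful for 0 < D <= r_i mu_2(S_2^m)).\<close>
definition lam2 :: "(real \<Rightarrow> real) \<Rightarrow> nat \<Rightarrow> nat \<Rightarrow> real \<Rightarrow> real \<Rightarrow> real" where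
  "lam2 mu2 i j D r =
     (if j = 1 then Inf {S. 0 \<le> S \<and> mu2 S = D / rr i r}
      else Sup {S. 0 \<le> S \<and> mu2 S = D / rr i r})"

definition Fij :: "real \<Rightarrow> real \<Rightarrow> (real \<Rightarrow> real) \<Rightarrow> (real \<Rightarrow> real) \<Rightarrow> nat \<Rightarrow> nat
    \<Rightarrow> real \<Rightarrow> real \<Rightarrow> real \<Rightarrow> real" where
  "Fij k1 k2 mu1 mu2 i j D r S2in = lam1 mu1 i D r + k1 / k2 * (lam2 mu2 i j D r - S2in)"

text \<open>Curve {S_1^in = lambda_1^i(D,r)} in the (D, S_1^in) plane, over D where lambda_1^i is finite.\<close>
definition curve_lam1 :: "(real \<Rightarrow> real) \<Rightarrow> real \<Rightarrow> nat \<Rightarrow> real \<Rightarrow> (real \<times> real) set" where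
  "curve_lam1 mu1 m1 i r = {(D, lam1 mu1 i D r) | D. 0 < D \<and> D < rr i r * m1}"

text \<open>Curve {S_1^in = F_ij(D,r,S_2^in)}, over D where lambda_1^i and lambda_2^{ij} are finite.\<close>
definition curve_F :: "real \<Rightarrow> real \<Rightarrow> (real \<Rightarrow> real) \<Rightarrow> (real \<Rightarrow> real) \<Rightarrow> real \<Rightarrow> real
    \<Rightarrow> nat \<Rightarrow> nat \<Rightarrow> real \<Rightarrow> real \<Rightarrow> (real \<times> real) set" where
  "curve_F k1 k2 mu1 mu2 m1 S2m i j r S2in =
     {(D, Fij k1 k2 mu1 mu2 i j D r S2in) | D.
        0 < D \<and> D < rr i r * m1 \<and> D \<le> rr i r * mu2 S2m}"

end

theory Submission imports Defs begin

lemma mu2_facts: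
  fixes mu2 mu2' :: "real \<Rightarrow> real" and S2m :: real
  assumes mu2_deriv: "\<forall>x\<ge>0. (mu2 has_real_derivative mu2' x) (at x within {0..})"
    and mu2_0: "mu2 0 = 0"
    and mu2_lim: "(mu2 \<longlongrightarrow> 0) at_top"
    and S2m: "S2m > 0"
    and mu2_incr: "\<forall>x. 0 < x \<and> x < S2m \<longrightarrow> mu2' x > 0"
    and mu2_decr: "\<forall>x. x > S2m \<longrightarrow> mu2' x < 0"
  shows "continuous_on {0..} mu2"
    and "\<And>x y. 0 \<le> x \<Longrightarrow> x < y \<Longrightarrow> y \<le> S2m \<Longrightarrow> mu2 x < mu2 y"
    and "\<And>x y. S2m \<le> x \<Longrightarrow> x < y \<Longrightarrow> mu2 y < mu2 x"
    and "\<And>x. 0 < x \<Longrightarrow> 0 < mu2 x"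
proof -
  show cont: "continuous_on {0..} mu2"
    unfolding continuous_on_eq_continuous_within
    using mu2_deriv DERIV_continuous by fastforce
  have dat: "(mu2 has_real_derivative mu2' x) (at x)" if "x > 0" for x
  proof -
    have "x \<in> interior {0::real..}" using that by simp
    then have "at x within {0..} = at x" by (rule at_within_interior)
    moreover have "(mu2 has_real_derivative mu2' x) (at x within {0..})" using mu2_deriv that by simp
    ultimately show ?thesis by simp
  qed
  show "mu2 x < mu2 y" if "0 \<le> x" "x < y" "y \<le> S2m" for x y
  proof (rule DERIV_pos_imp_increasing_open[OF that(2)])
    fix z assume z: "x < z" "z < y"
    then have "0 < z" "z < S2m" using that by linarith+
    then show "\<exists>d. DERIV mu2 z :> d \<and> d > 0" using dat[of z] mu2_incr by blast
  next
    show "continuous_on {x..y} mu2" by (rule continuous_on_subset[OF cont]) (use that S2m in auto)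
  qed
  show "mu2 y < mu2 x" if "S2m \<le> x" "x < y" for x y
  proof (rule DERIV_neg_imp_decreasing_open[OF that(2)])
    fix z assume z: "x < z" "z < y"
    then have "0 < z" "z > S2m" using that S2m by linarith+
    then show "\<exists>d. DERIV mu2 z :> d \<and> d < 0" using dat[of z] mu2_decr by blast
  next
    show "continuous_on {x..y} mu2" by (rule continuous_on_subset[OF cont]) (use that S2m in auto)
  qed
  show "0 < mu2 x" if "0 < x" for x
  proof (cases "x \<le> S2m")
    case True
    have "mu2 0 < mu2 x"
    proof (rule DERIV_pos_imp_increasing_open[OF that])
      fix z assume z: "0 < z" "z < x"
      then have "0 < z" "z < S2m" using True by linarith+
      then show "\<exists>d. DERIV mu2 z :> d \<and> d > 0" using dat[of z] mu2_incr by blast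
    next
      show "continuous_on {0..x} mu2" by (rule continuous_on_subset[OF cont]) auto
    qed
    then show ?thesis using mu2_0 by simp
  next
    case False
    show ?thesis
    proof (rule DERIV_neg_imp_decreasing_at_top[OF _ mu2_lim])
      fix y assume "y \<ge> x"
      then have "0 < y" "y > S2m" using that False by linarith+
      then show "\<exists>d. DERIV mu2 y :> d \<and> d < 0" using dat[of y] mu2_decr by blast
    qed
  qed
qed

lemma two_roots:
  fixes mu2 :: "real \<Rightarrow> real" and S2m c :: real
  assumes cont: "continuous_on {0..} mu2"
    and inc: "\<And>x y. 0 \<le> x \<Longrightarrow> x < y \<Longrightarrow> y \<le> S2m \<Longrightarrow> mu2 x < mu2 y"
    and dec: "\<And>x y. S2m \<le> x \<Longrightarrow> x < y \<Longrightarrow> mu2 y < mu2 x"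
    and mu2_0: "mu2 0 = 0"
    and mu2_lim: "(mu2 \<longlongrightarrow> 0) at_top"
    and S2m: "S2m > 0"
    and c: "0 < c" "c < mu2 S2m"
  shows "\<exists>a b. 0 < a \<and> a < S2m \<and> S2m < b \<and> {S. 0 \<le> S \<and> mu2 S = c} = {a, b}"
proof -
  obtain a where a: "0 \<le> a" "a \<le> S2m" "mu2 a = c"
  proof -
    have "continuous_on {0..S2m} mu2" by (rule continuous_on_subset[OF cont]) auto
    then have "\<exists>x. 0 \<le> x \<and> x \<le> S2m \<and> mu2 x = c"
      using c S2m mu2_0 by (intro IVT') auto
    then show ?thesis using that by blast
  qed
  have "\<forall>\<^sub>F x in at_top. mu2 x < c" using mu2_lim c(1) order_tendstoD(2) by blast
  then obtain X where X: "\<And>x. x \<ge> X \<Longrightarrow> mu2 x < c" by (auto simp: eventually_at_top_linorder)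
  define Y where "Y = max X (S2m + 1)"
  have Y: "mu2 Y < c" "Y > S2m" using X[of Y] by (auto simp: Y_def)
  obtain b where b: "S2m \<le> b" "b \<le> Y" "mu2 b = c"
  proof -
    have "continuous_on {S2m..Y} mu2" by (rule continuous_on_subset[OF cont]) (use S2m in auto)
    then have "\<exists>x. S2m \<le> x \<and> x \<le> Y \<and> mu2 x = c"
      using c S2m Y by (intro IVT2') auto
    then show ?thesis using that by blast
  qed
  have a': "0 < a" "a < S2m" using a c mu2_0 by (auto simp: order.order_iff_strict)
  have b': "S2m < b" using b c by (cases "b = S2m") auto
  have "{S. 0 \<le> S \<and> mu2 S = c} = {a, b}"
  proof (rule set_eqI, rule iffI)
    fix S assume "S \<in> {S. 0 \<le> S \<and> mu2 S = c}"
    then have S: "0 \<le> S" "mu2 S = c" by auto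
    show "S \<in> {a, b}"
    proof (cases "S \<le> S2m")
      case True
      have "S = a"
      proof (rule ccontr)
        assume "S \<noteq> a"
        then have "S < a \<or> a < S" by linarith
        then show False using inc[of S a] inc[of a S] S a True by force
      qed
      then show ?thesis by simp
    next
      case False
      have "S = b"
      proof (rule ccontr)
        assume "S \<noteq> b"
        then have "S < b \<or> b < S" by linarith
        then show False using dec[of S b] dec[of b S] S b False by force
      qed
      then show ?thesis by simp
    qed
  qed (use a b in auto)
  then show ?thesis using a' b' by blast
qed

theorem proposition4p2:
  fixes mu1 mu2 mu1' mu2' :: "real \<Rightarrow> real" and k1 k2 r S2in m1 S2m :: real
  assumes k1: "k1 > 0" and k2: "k2 > 0"
    and r: "0 < r" "r < 1"
    and S2in: "S2in > 0"
    and mu1_deriv: "\<forall>x\<ge>0. (mu1 has_real_derivative mu1' x) (at x within {0..})"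
    and mu1'_cont: "continuous_on {0..} mu1'"
    and mu1_0: "mu1 0 = 0"
    and mu1_lim: "(mu1 \<longlongrightarrow> m1) at_top"
    and mu1_incr: "\<forall>x>0. mu1' x > 0"
    and mu2_deriv: "\<forall>x\<ge>0. (mu2 has_real_derivative mu2' x) (at x within {0..})"
    and mu2'_cont: "continuous_on {0..} mu2'"
    and mu2_0: "mu2 0 = 0"
    and mu2_lim: "(mu2 \<longlongrightarrow> 0) at_top"
    and S2m: "S2m > 0"
    and mu2_incr: "\<forall>x. 0 < x \<and> x < S2m \<longrightarrow> mu2' x > 0"
    and mu2_decr: "\<forall>x. x > S2m \<longrightarrow> mu2' x < 0"
    and m1: "m1 > mu2 S2in"
  shows "\<forall>i\<in>{1::nat, 2}.
    (let Ds = rr i r * mu2 S2in;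
         P = (Ds, lam1 mu1 i Ds r);
         V = {Ds} \<times> (UNIV :: real set);
         G = curve_lam1 mu1 m1 i r;
         L = (\<lambda>D. lam1 mu1 i D r);
         F = (\<lambda>j D. Fij k1 k2 mu1 mu2 i j D r S2in)
     in G \<inter> V = {P}
      \<and> (S2in \<ge> S2m \<longrightarrow> G \<inter> curve_F k1 k2 mu1 mu2 m1 S2m i 2 r S2in \<inter> V = {P})
      \<and> (S2in < S2m \<longrightarrow> G \<inter> curve_F k1 k2 mu1 mu2 m1 S2m i 1 r S2in \<inter> V = {P})
      \<and> (\<forall>D. 0 < D \<and> D < min (rr i r * m1) (rr i r * mu2 S2m) \<longrightarrow>
            (D < Ds \<longrightarrow> F 1 D < L D \<and> L D < F 2 D)
          \<and> (D > Ds \<and> S2in \<ge> S2m \<longrightarrow> F 1 D < F 2 D \<and> F 2 D < L D)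
          \<and> (D > Ds \<and> S2in < S2m \<longrightarrow> L D < F 1 D \<and> F 1 D < F 2 D)))"
proof
  fix i :: nat assume i: "i \<in> {1, 2}"
  have ri: "rr i r > 0" using i r by (auto simp: rr_def)
  note mf = mu2_facts[OF mu2_deriv mu2_0 mu2_lim S2m mu2_incr mu2_decr]
  have c0pos: "mu2 S2in > 0" using mf(4) S2in .
  have c0le: "mu2 S2in \<le> mu2 S2m"
  proof (cases S2in S2m rule: linorder_cases)
    case less then show ?thesis using mf(2)[of S2in S2m] S2in by simp
  next
    case greater then show ?thesis using mf(3)[of S2m S2in] by simp
  qed simp
  define Ds where "Ds = rr i r * mu2 S2in"
  have Ds_pos: "Ds > 0" using ri c0pos by (simp add: Ds_def)
  have Ds_div: "Ds / rr i r = mu2 S2in" using ri by (simp add: Ds_def)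
  have Ds_lt: "Ds < rr i r * m1" using ri m1 by (simp add: Ds_def)
  have Ds_le: "Ds \<le> rr i r * mu2 S2m" using ri c0le by (simp add: Ds_def)
  have kk: "k1 / k2 > 0" using k1 k2 by simp
  have GV: "curve_lam1 mu1 m1 i r \<inter> {Ds} \<times> UNIV = {(Ds, lam1 mu1 i Ds r)}"
    unfolding curve_lam1_def using Ds_pos Ds_lt by auto
  have P2: "curve_lam1 mu1 m1 i r \<inter> curve_F k1 k2 mu1 mu2 m1 S2m i 2 r S2in \<inter> {Ds} \<times> UNIV
      = {(Ds, lam1 mu1 i Ds r)}" if h: "S2in \<ge> S2m"
  proof -
    have "lam2 mu2 i 2 Ds r = S2in"
      unfolding lam2_def Ds_div
    proof (simp, rule cSup_eq_maximum)
      show "S2in \<in> {S. 0 \<le> S \<and> mu2 S = mu2 S2in}" using S2in by simp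
      show "x \<le> S2in" if "x \<in> {S. 0 \<le> S \<and> mu2 S = mu2 S2in}" for x
        using that mf(3)[of S2in x] h by force
    qed
    then have "Fij k1 k2 mu1 mu2 i 2 Ds r S2in = lam1 mu1 i Ds r" by (simp add: Fij_def)
    then show ?thesis unfolding curve_lam1_def curve_F_def using Ds_pos Ds_lt Ds_le by auto
  qed
  have P1: "curve_lam1 mu1 m1 i r \<inter> curve_F k1 k2 mu1 mu2 m1 S2m i 1 r S2in \<inter> {Ds} \<times> UNIV
      = {(Ds, lam1 mu1 i Ds r)}" if h: "S2in < S2m"
  proof -
    have "lam2 mu2 i 1 Ds r = S2in"
      unfolding lam2_def Ds_div
    proof (simp, rule cInf_eq_minimum)
      show "S2in \<in> {S. 0 \<le> S \<and> mu2 S = mu2 S2in}" using S2in by simp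
      show "S2in \<le> x" if "x \<in> {S. 0 \<le> S \<and> mu2 S = mu2 S2in}" for x
        using that mf(2)[of x S2in] h by force
    qed
    then have "Fij k1 k2 mu1 mu2 i 1 Ds r S2in = lam1 mu1 i Ds r" by (simp add: Fij_def)
    then show ?thesis unfolding curve_lam1_def curve_F_def using Ds_pos Ds_lt Ds_le by auto
  qed
  have P4: "(D < Ds \<longrightarrow> Fij k1 k2 mu1 mu2 i 1 D r S2in < lam1 mu1 i D r
               \<and> lam1 mu1 i D r < Fij k1 k2 mu1 mu2 i 2 D r S2in)
          \<and> (D > Ds \<and> S2in \<ge> S2m \<longrightarrow> Fij k1 k2 mu1 mu2 i 1 D r S2in < Fij k1 k2 mu1 mu2 i 2 D r S2in
               \<and> Fij k1 k2 mu1 mu2 i 2 D r S2in < lam1 mu1 i D r)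
          \<and> (D > Ds \<and> S2in < S2m \<longrightarrow> lam1 mu1 i D r < Fij k1 k2 mu1 mu2 i 1 D r S2in
               \<and> Fij k1 k2 mu1 mu2 i 1 D r S2in < Fij k1 k2 mu1 mu2 i 2 D r S2in)"
    if D: "0 < D" "D < min (rr i r * m1) (rr i r * mu2 S2m)" for D
  proof -
    define c where "c = D / rr i r"
    have c: "0 < c" "c < mu2 S2m" using D ri by (auto simp: c_def field_simps)
    obtain a b where ab: "0 < a" "a < S2m" "S2m < b" "{S. 0 \<le> S \<and> mu2 S = c} = {a, b}"
      using two_roots[OF mf(1) mf(2) mf(3) mu2_0 mu2_lim S2m c] by blast
    have ab_eq: "mu2 a = c" "mu2 b = c" using ab(4) by blast+
    have la: "lam2 mu2 i 1 D r = a" and lb: "lam2 mu2 i 2 D r = b"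
    proof -
      have "Inf {a, b} = a" by (rule cInf_eq_minimum) (use ab in auto)
      moreover have "Sup {a, b} = b" by (rule cSup_eq_maximum) (use ab in auto)
      ultimately show "lam2 mu2 i 1 D r = a" "lam2 mu2 i 2 D r = b"
        unfolding lam2_def c_def[symmetric] ab(4) by auto
    qed
    have F1: "Fij k1 k2 mu1 mu2 i 1 D r S2in = lam1 mu1 i D r + k1 / k2 * (a - S2in)"
      and F2: "Fij k1 k2 mu1 mu2 i 2 D r S2in = lam1 mu1 i D r + k1 / k2 * (b - S2in)"
      unfolding Fij_def la lb by simp_all
    have DDs: "D < Ds \<longleftrightarrow> c < mu2 S2in" using ri by (simp add: c_def Ds_def field_simps)
    have a1: "a < S2in" if "c < mu2 S2in"
    proof (rule ccontr)
      assume "\<not> a < S2in"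
      then have "S2in \<le> a" by simp
      then show False using mf(2)[of S2in a] ab ab_eq that S2in by (cases "S2in = a") auto
    qed
    have b1: "S2in < b" if "c < mu2 S2in"
    proof (rule ccontr)
      assume "\<not> S2in < b"
      then have "b \<le> S2in" by simp
      then show False using mf(3)[of b S2in] ab ab_eq that by (cases "S2in = b") auto
    qed
    have b2: "b < S2in" if "c > mu2 S2in" "S2in \<ge> S2m"
    proof (rule ccontr)
      assume "\<not> b < S2in"
      then have "S2in \<le> b" by simp
      then show False using mf(3)[of S2in b] ab ab_eq that by (cases "S2in = b") auto
    qed
    have a2: "S2in < a" if "c > mu2 S2in" "S2in < S2m"
    proof (rule ccontr)
      assume "\<not> S2in < a"
      then have "a \<le> S2in" by simp
      then show False using mf(2)[of a S2in] ab ab_eq that by (cases "S2in = a") auto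
    qed
    have DDs2: "D > Ds \<longleftrightarrow> c > mu2 S2in" using ri by (simp add: c_def Ds_def field_simps)
    have ab_lt: "a < b" using ab by simp
    have m: "\<And>u v. u < v \<Longrightarrow> k1 / k2 * u < k1 / k2 * v" using kk by (rule mult_strict_left_mono[rotated])
    show ?thesis unfolding F1 F2 DDs DDs2
      using a1 b1 a2 b2 ab_lt m[of "a - S2in" "b - S2in"] m[of "a - S2in" 0] m[of 0 "b - S2in"]
        m[of "b - S2in" 0] m[of 0 "a - S2in"] by auto
  qed
  show "let Ds = rr i r * mu2 S2in;
         P = (Ds, lam1 mu1 i Ds r);
         V = {Ds} \<times> (UNIV :: real set);
         G = curve_lam1 mu1 m1 i r;
         L = (\<lambda>D. lam1 mu1 i D r);
         F = (\<lambda>j D. Fij k1 k2 mu1 mu2 i j D r S2in)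
     in G \<inter> V = {P}
      \<and> (S2in \<ge> S2m \<longrightarrow> G \<inter> curve_F k1 k2 mu1 mu2 m1 S2m i 2 r S2in \<inter> V = {P})
      \<and> (S2in < S2m \<longrightarrow> G \<inter> curve_F k1 k2 mu1 mu2 m1 S2m i 1 r S2in \<inter> V = {P})
      \<and> (\<forall>D. 0 < D \<and> D < min (rr i r * m1) (rr i r * mu2 S2m) \<longrightarrow>
            (D < Ds \<longrightarrow> F 1 D < L D \<and> L D < F 2 D)
          \<and> (D > Ds \<and> S2in \<ge> S2m \<longrightarrow> F 1 D < F 2 D \<and> F 2 D < L D)
          \<and> (D > Ds \<and> S2in < S2m \<longrightarrow> L D < F 1 D \<and> F 1 D < F 2 D))"
    unfolding Let_def Ds_def[symmetric] using GV P1 P2 P4 by blast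
qed

end
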